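(* Let $Y$ be a real normed space, $K\subset Y$ a pointed closed convex cone, and $A,B,C\subset Y$ nonempty sets such that $C$ is $K$-bounded and $$A+C\subset\operatorname{cl}(C+B+K).$$ Then $A\subset\operatorname{cl}\operatorname{conv}(B+K)$.
   Context: A nonempty set $C\subset Y$ is $K$-bounded if there is a bounded set $M\subset Y$ with $C\subset M+K$. $\operatorname{cl}$ denotes norm closure and $\operatorname{conv}$ the convex hull. *)

theory Defs
  imports "HOL-Analysis.Analysis"
begin

definition msum :: "'a::real_normed_vector set \<Rightarrow> 'a set \<Rightarrow> 'a set" where
  "msum A B = {a + b | a b. a \<in> A \<and> b \<in> B}"

definition pointed_cone :: "'a::real_normed_vector set \<Rightarrow> bool" where
  "pointed_cone K \<longleftrightarrow> cone K \<and> K \<inter> uminus ` K = {0}"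

definition K_bounded :: "'a::real_normed_vector set \<Rightarrow> 'a set \<Rightarrow> bool" where
  "K_bounded K C \<longleftrightarrow> C \<noteq> {} \<and> (\<exists>M. bounded M \<and> C \<subseteq> msum M K)"

end

theory Submission
  imports Defs
begin

theorem mainTheorem3:
  fixes K A B C :: "'a::real_normed_vector set"
  assumes "pointed_cone K" and "closed K" and "convex K"
    and "A \<noteq> {}" and "B \<noteq> {}" and "C \<noteq> {}"
    and "K_bounded K C"
    and "msum A C \<subseteq> closure (msum (msum C B) K)"
  shows "A \<subseteq> closure (convex hull (msum B K))"
proof
  fix a assume aA: "a \<in> A"
  have coneK: "cone K" using assms(1) unfolding pointed_cone_def by simp
  have KK: "k1 + k2 \<in> K" if "k1 \<in> K" "k2 \<in> K" for k1 k2
  proof -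
    have "(1/2) *\<^sub>R k1 + (1/2) *\<^sub>R k2 \<in> K"
      using assms(3) that unfolding convex_def by (metis add_divide_distrib divide_self_if less_eq_real_def one_add_one zero_less_divide_1_iff zero_less_numeral zero_neq_numeral)
    then have "(2::real) *\<^sub>R ((1/2) *\<^sub>R k1 + (1/2) *\<^sub>R k2) \<in> K"
      using coneK unfolding cone_def by simp
    then show ?thesis by (simp add: scaleR_add_right)
  qed
  show "a \<in> closure (convex hull (msum B K))"
    unfolding closure_approachable
  proof (intro allI impI)
    fix e :: real assume e: "e > 0"
    obtain M where M: "bounded M" "C \<subseteq> msum M K" using assms(7) unfolding K_bounded_def by blast
    obtain R where R: "\<And>m. m \<in> M \<Longrightarrow> norm m \<le> R" using M(1) unfolding bounded_iff by blast
    obtain c1 where c1: "c1 \<in> C" using assms(6) by blast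
    have step: "\<forall>c\<in>C. \<exists>t. fst t \<in> C \<and> fst (snd t) \<in> B \<and> snd (snd t) \<in> K \<and>
        norm (a + c - (fst t + (fst (snd t) + snd (snd t)))) < e/2"
    proof
      fix c assume c: "c \<in> C"
      have "a + c \<in> msum A C" using aA c unfolding msum_def by blast
      then have "a + c \<in> closure (msum (msum C B) K)" using assms(8) by blast
      then obtain z where z: "z \<in> msum (msum C B) K" "dist (a + c) z < e/2"
        using closure_approachableD[of "a+c" _ "e/2"] e by auto
      then obtain c' b k where "c' \<in> C" "b \<in> B" "k \<in> K" "z = c' + b + k"
        unfolding msum_def by blast
      then show "\<exists>t. fst t \<in> C \<and> fst (snd t) \<in> B \<and> snd (snd t) \<in> K \<and>
        norm (a + c - (fst t + (fst (snd t) + snd (snd t)))) < e/2"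
        using z(2) by (intro exI[of _ "(c', b, k)"]) (auto simp: dist_norm add.assoc)
    qed
    then obtain g where g: "\<And>c. c \<in> C \<Longrightarrow> fst (g c) \<in> C \<and> fst (snd (g c)) \<in> B \<and> snd (snd (g c)) \<in> K \<and>
        norm (a + c - (fst (g c) + (fst (snd (g c)) + snd (snd (g c))))) < e/2"
      by metis
    define cs where "cs = rec_nat c1 (\<lambda>_ c. fst (g c))"
    have cs0: "cs 0 = c1" and csS: "\<And>i. cs (Suc i) = fst (g (cs i))" by (simp_all add: cs_def)
    have csC: "cs i \<in> C" for i
      by (induction i) (use c1 g in \<open>auto simp: cs0 csS\<close>)
    define bb where "bb i = fst (snd (g (cs i)))" for i
    define kk where "kk i = snd (snd (g (cs i)))" for i
    have bbB: "bb i \<in> B" and kkK: "kk i \<in> K" for i using g[OF csC[of i]] by (auto simp: bb_def kk_def)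
    define d where "d i = a + cs i - cs (Suc i) - (bb i + kk i)" for i
    have dn: "norm (d i) < e/2" for i
      using g[OF csC[of i]] by (simp add: d_def bb_def kk_def csS algebra_simps)
    obtain n :: nat where n: "real n > max 1 (2*(R + norm c1)/e)"
      using reals_Archimedean2 by blast
    have npos: "n > 0" using n by auto
    have "cs n \<in> msum M K" using csC M(2) by blast
    then obtain m k where mk: "m \<in> M" "k \<in> K" "cs n = m + k" unfolding msum_def by blast
    define w where "w i = bb i + kk i + (if i = 0 then k else 0)" for i
    have wBK: "w i \<in> msum B K" for i
    proof (cases "i = 0")
      case True
      then have "w i = bb i + (kk i + k)" by (simp add: w_def add.assoc)
      then show ?thesis using bbB kkK KK mk(2) unfolding msum_def by blast
    next
      case False
      then show ?thesis using bbB kkK unfolding msum_def w_def by auto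
    qed
    define y where "y = (\<Sum>i<n. (1 / real n) *\<^sub>R w i)"
    have yin: "y \<in> convex hull (msum B K)"
      unfolding y_def
      by (rule convex_sum) (use npos wBK in \<open>auto intro: hull_inc simp: convex_convex_hull\<close>)
    have sw: "(\<Sum>i<n. w i) = (\<Sum>i<n. bb i + kk i) + k"
    proof -
      have "(\<Sum>i<n. w i) = (\<Sum>i<n. bb i + kk i) + (\<Sum>i<n. (if i = 0 then k else 0))"
        by (simp add: w_def sum.distrib)
      also have "(\<Sum>i<n. (if i = 0 then k else 0)) = k" using npos by (simp add: sum.delta)
      finally show ?thesis .
    qed
    have tel: "(\<Sum>i<n. cs i - cs (Suc i)) = c1 - cs n"
      using sum_lessThan_telescope'[of cs n] cs0 by simp
    have sd: "(\<Sum>i<n. d i) = real n *\<^sub>R a + (c1 - cs n) - (\<Sum>i<n. bb i + kk i)"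
    proof -
      have "(\<Sum>i<n. d i) = (\<Sum>i<n. a) + (\<Sum>i<n. cs i - cs (Suc i)) - (\<Sum>i<n. bb i + kk i)"
        unfolding d_def by (simp add: sum.distrib sum_subtractf algebra_simps)
      then show ?thesis using tel by (simp add: sum_constant_scaleR)
    qed
    have key: "real n *\<^sub>R (a - y) = (\<Sum>i<n. d i) - c1 + m"
    proof -
      have "real n *\<^sub>R y = (\<Sum>i<n. w i)"
        unfolding y_def scaleR_sum_right using npos by simp
      then have "real n *\<^sub>R (a - y) = real n *\<^sub>R a - ((\<Sum>i<n. bb i + kk i) + k)"
        using sw by (simp add: scaleR_diff_right)
      also have "\<dots> = (\<Sum>i<n. d i) - c1 + m" unfolding sd mk(3) by (simp add: algebra_simps)
      finally show ?thesis .
    qed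
    have "norm ((\<Sum>i<n. d i) - c1 + m) \<le> norm (\<Sum>i<n. d i) + norm c1 + norm m"
      by (smt (verit) norm_triangle_ineq norm_triangle_ineq4)
    also have "norm (\<Sum>i<n. d i) \<le> (\<Sum>i<n. norm (d i))" by (rule norm_sum)
    also have "(\<Sum>i<n. norm (d i)) < (\<Sum>i<n. e/2)"
      using npos dn by (intro sum_strict_mono) auto
    also have "(\<Sum>i<n. e/2) = real n * (e/2)" by simp
    finally have lt: "norm ((\<Sum>i<n. d i) - c1 + m) < real n * (e/2) + norm c1 + R"
      using R[OF mk(1)] by linarith
    have "real n * norm (a - y) < real n * (e/2) + norm c1 + R"
      using key lt by (metis abs_of_nat norm_scaleR real_norm_def)
    moreover have "norm c1 + R < real n * (e/2)"
      using n e by (simp add: field_simps)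
    ultimately have "real n * norm (a - y) < real n * e" by linarith
    then have "norm (a - y) < e" using npos by simp
    then show "\<exists>y\<in>convex hull msum B K. dist y a < e"
      using yin by (intro bexI[of _ y]) (auto simp: dist_norm norm_minus_commute)
  qed
qed

end
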